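(* Let $K\ge1$, $\alpha\in(0,1]$ and $\gamma\in(0,1]$. For $i\in[K]$ let $F_i$ be an arbitrary nonnegative random variable and $E_i$ a nonnegative random variable such that $\mathbb E[E_i]\le1$ whenever the $i$-th null hypothesis is true; the $F_i$ and $E_i$ may be arbitrarily dependent. For each $i$, draw $T_i$ such that conditionally on all $F_j,E_j$, $T_i\sim\mathrm{Bern}((1-\gamma F_i^{-1})_+)$, and set $\tilde E_i := (1-T_i)F_i + T_i(1-\gamma)E_i$. Let $\mathcal R^{\mathrm{acteBH}}$ be the output of the e-BH procedure at level $\alpha$ applied to $(\tilde E_1,\dots,\tilde E_K)$. Then $\mathrm{FDR}(\mathcal R^{\mathrm{acteBH}})\le\alpha$.
   Context: e-BH at level $\alpha$: with $E_{[i]}$ the $i$-th largest input e-value, $k^{\mathrm{eBH}}=\max\{i\in[K]: E_{[i]}\ge K/(\alpha i)\}$ and the rejection set is $\{i: E_i\ge K/(\alpha k^{\mathrm{eBH}})\}$ (empty if no such $i$). $\mathrm{FDR}(\mathcal R)=\mathbb E\big[|\mathcal N\cap\mathcal R|/(|\mathcal R|\vee1)\big]$ where $\mathcal N$ is the set of true nulls. $x_+=\max(x,0)$; $(1-\gamma F^{-1})_+=0$ when $F=0$. *)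

theory Defs
  imports "HOL-Probability.Probability"
begin

text \<open>Hypotheses are indexed by 0,...,K-1 (i.e. the set {..<K}).\<close>

definition kth_largest :: "nat \<Rightarrow> (nat \<Rightarrow> real) \<Rightarrow> nat \<Rightarrow> real" where
  "kth_largest K e i = rev (sort (map e [0..<K])) ! (i - 1)"

definition ebh_k :: "nat \<Rightarrow> real \<Rightarrow> (nat \<Rightarrow> real) \<Rightarrow> nat" where
  "ebh_k K \<alpha> e = Max ({0} \<union> {i \<in> {1..K}. kth_largest K e i \<ge> real K / (\<alpha> * real i)})"

definition ebh :: "nat \<Rightarrow> real \<Rightarrow> (nat \<Rightarrow> real) \<Rightarrow> nat set" where
  "ebh K \<alpha> e = (if {i \<in> {1..K}. kth_largest K e i \<ge> real K / (\<alpha> * real i)} = {} then {}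
     else {i \<in> {..<K}. e i \<ge> real K / (\<alpha> * real (ebh_k K \<alpha> e))})"

text \<open>(1 - gamma / F)_+ with the convention that it is 0 when F = 0.\<close>
definition bern_prob :: "real \<Rightarrow> real \<Rightarrow> real" where
  "bern_prob \<gamma> f = (if f = 0 then 0 else max (1 - \<gamma> / f) 0)"

definition FE_sigma :: "'a measure \<Rightarrow> nat \<Rightarrow> (nat \<Rightarrow> 'a \<Rightarrow> real) \<Rightarrow> (nat \<Rightarrow> 'a \<Rightarrow> real) \<Rightarrow> 'a measure" where
  "FE_sigma M K F E = sigma (space M)
     ({F j -` B \<inter> space M | j B. j < K \<and> B \<in> sets borel} \<union>
      {E j -` B \<inter> space M | j B. j < K \<and> B \<in> sets borel})"

definition FDP :: "nat set \<Rightarrow> nat set \<Rightarrow> real" where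
  "FDP N R = real (card (N \<inter> R)) / real (max (card R) 1)"

end

theory Submission
  imports Defs
begin


lemma card_ge_kth:
  assumes "1 \<le> k" "k \<le> K" "kth_largest K e k \<ge> t"
  shows "k \<le> card {i\<in>{..<K}. e i \<ge> t}"
proof -
  let ?xs = "map e [0..<K]"
  let ?zs = "sort ?xs"
  have L: "length ?zs = K" by simp
  have kl: "kth_largest K e k = ?zs ! (K - k)" unfolding kth_largest_def using assms
    by (simp add: rev_nth Suc_diff_Suc)
  have sub: "{K-k..<K} \<subseteq> {m. m < length ?zs \<and> t \<le> ?zs!m}"
  proof
    fix m assume m: "m \<in> {K-k..<K}"
    have "?zs ! (K-k) \<le> ?zs ! m"
      by (rule sorted_nth_mono[OF sorted_sort]) (use m in auto)
    then show "m \<in> {m. m < length ?zs \<and> t \<le> ?zs!m}" using m assms kl by auto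
  qed
  have "k = card {K-k..<K}" using assms by simp
  also have "\<dots> \<le> card {m. m < length ?zs \<and> t \<le> ?zs!m}"
    by (rule card_mono[OF _ sub]) simp
  also have "\<dots> = length (filter (\<lambda>x. t \<le> x) ?zs)" by (simp add: length_filter_conv_card)
  also have "\<dots> = length (filter (\<lambda>x. t \<le> x) ?xs)"
    by (metis mset_filter size_mset mset_sort)
  also have "\<dots> = card {i. i < K \<and> t \<le> e i}" unfolding length_filter_conv_card
    by (rule arg_cong[where f=card]) auto
  finally show ?thesis by (simp add: lessThan_def)
qed

lemma fdp_bound:
  assumes N: "N \<subseteq> {..<K}" and a: "\<alpha> > 0" and K: "K \<ge> 1" and e: "\<And>i. i < K \<Longrightarrow> e i \<ge> 0"
  shows "FDP N (ebh K \<alpha> e) \<le> (\<Sum>i\<in>N. \<alpha> * e i / real K)"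
proof (cases "{i \<in> {1..K}. kth_largest K e i \<ge> real K / (\<alpha> * real i)} = {}")
  case True
  then have "FDP N (ebh K \<alpha> e) = 0" by (simp add: ebh_def FDP_def)
  moreover have "(\<Sum>i\<in>N. \<alpha> * e i / real K) \<ge> 0"
    using N a e by (intro sum_nonneg) auto
  ultimately show ?thesis by simp
next
  case False
  define S where "S = {i \<in> {1..K}. kth_largest K e i \<ge> real K / (\<alpha> * real i)}"
  define k where "k = ebh_k K \<alpha> e"
  have fin: "finite ({0} \<union> S)" unfolding S_def by auto
  have kdef: "k = Max ({0} \<union> S)" unfolding k_def ebh_k_def S_def by simp
  obtain s where s: "s \<in> S" using False S_def by auto
  have "s \<le> k" unfolding kdef using fin s by (intro Max_ge) auto
  moreover have "s \<ge> 1" using s S_def by auto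
  ultimately have k1: "k \<ge> 1" by simp
  have "k \<in> {0} \<union> S" unfolding kdef using fin by (intro Max_in) auto
  with k1 have kS: "k \<in> S" by auto
  define R where "R = {i\<in>{..<K}. e i \<ge> real K / (\<alpha> * real k)}"
  have ebhR: "ebh K \<alpha> e = R" unfolding ebh_def R_def k_def by (rule if_not_P[OF False])
  have cR: "k \<le> card R" unfolding R_def using kS S_def by (intro card_ge_kth) auto
  have finR: "finite R" unfolding R_def by auto
  have "FDP N R = real (card (N \<inter> R)) / real (card R)" unfolding FDP_def using cR k1 by simp
  also have "\<dots> \<le> real (card (N \<inter> R)) / real k"
    using cR k1 by (intro divide_left_mono) auto
  also have "\<dots> = (\<Sum>i\<in>N \<inter> R. 1 / real k)" by simp
  also have "\<dots> \<le> (\<Sum>i\<in>N \<inter> R. \<alpha> * e i / real K)"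
  proof (rule sum_mono)
    fix i assume i: "i \<in> N \<inter> R"
    then have ei: "e i \<ge> real K / (\<alpha> * real k)" unfolding R_def by auto
    have Kp: "real K > 0" using K by simp
    have "1 / real k = \<alpha> * (real K / (\<alpha> * real k)) / real K" using a Kp k1 by (simp add: field_simps)
    also have "\<dots> \<le> \<alpha> * e i / real K" using ei a Kp
      by (intro divide_right_mono mult_left_mono) auto
    finally show "1 / real k \<le> \<alpha> * e i / real K" .
  qed
  also have "\<dots> \<le> (\<Sum>i\<in>N. \<alpha> * e i / real K)"
    using N a e finR by (intro sum_mono2) (auto intro: finite_subset)
  finally show ?thesis using ebhR by simp
qed


lemma cond_event:
  assumes S: "sets S \<subseteq> sets M" "space S = space M"
  and B: "B \<in> sets M"
  and q: "q \<in> borel_measurable S"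
  and eq: "\<And>A. A \<in> sets S \<Longrightarrow> emeasure M (B \<inter> A) = (\<integral>\<^sup>+x. q x * indicator A x \<partial>M)"
  and g: "g \<in> borel_measurable S"
  shows "(\<integral>\<^sup>+x. indicator B x * g x \<partial>M) = (\<integral>\<^sup>+x. q x * g x \<partial>M)"
proof -
  have idS: "id \<in> measurable M S"
  proof (rule measurableI)
    fix x assume "x \<in> space M" then show "id x \<in> space S" using S by simp
  next
    fix A assume A: "A \<in> sets S"
    then have "A \<subseteq> space M" using S sets.sets_into_space by blast
    then have "id -` A \<inter> space M = A" by auto
    then show "id -` A \<inter> space M \<in> sets M" using A S by auto
  qed
  have qM: "q \<in> borel_measurable M" using measurable_comp[OF idS q] by (simp add: comp_def)
  have gM: "g \<in> borel_measurable M" using measurable_comp[OF idS g] by (simp add: comp_def)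
  have BM: "(\<lambda>x. indicator B x :: ennreal) \<in> borel_measurable M" using B by simp
  let ?m1 = "distr (density M (indicator B)) S id"
  let ?m2 = "density (distr M S id) q"
  have qD: "q \<in> borel_measurable (distr M S id)" using q by simp
  have meq: "?m1 = ?m2"
  proof (rule measure_eqI)
    show "sets ?m1 = sets ?m2" by simp
  next
    fix A assume "A \<in> sets ?m1"
    then have A: "A \<in> sets S" by simp
    then have AM: "A \<in> sets M" using S by auto
    have sub: "A \<subseteq> space M" using AM sets.sets_into_space by blast
    have "emeasure ?m1 A = emeasure (density M (indicator B)) A"
      using A sub idS by (simp add: emeasure_distr Int_absorb2 vimage_id)
    also have "\<dots> = (\<integral>\<^sup>+x. indicator B x * indicator A x \<partial>M)"
      using AM BM by (simp add: emeasure_density)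
    also have "\<dots> = emeasure M (B \<inter> A)"
      using AM B by (simp add: indicator_inter_arith[symmetric] nn_integral_indicator)
    also have "\<dots> = (\<integral>\<^sup>+x. q x * indicator A x \<partial>M)" using eq[OF A] .
    also have "\<dots> = emeasure ?m2 A"
      using A qD idS by (simp add: emeasure_density nn_integral_distr)
    finally show "emeasure ?m1 A = emeasure ?m2 A" .
  qed
  have "(\<integral>\<^sup>+x. indicator B x * g x \<partial>M) = (\<integral>\<^sup>+x. g x \<partial>?m1)"
    using idS g gM BM by (simp add: nn_integral_distr nn_integral_density)
  also have "\<dots> = (\<integral>\<^sup>+x. g x \<partial>?m2)" using meq by simp
  also have "\<dots> = (\<integral>\<^sup>+x. q x * g x \<partial>M)"
    using idS g qD q by (simp add: nn_integral_distr nn_integral_density)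
  finally show ?thesis .
qed


lemma cond_event_real:
  assumes P: "prob_space M"
  and S: "sets S \<subseteq> sets M" "space S = space M"
  and B: "B \<in> sets M"
  and q: "q \<in> borel_measurable S" and qb: "\<And>x. x \<in> space M \<Longrightarrow> 0 \<le> q x \<and> q x \<le> 1"
  and eq: "\<And>A. A \<in> sets S \<Longrightarrow> measure M (B \<inter> A) = (\<integral>x. indicator A x * q x \<partial>M)"
  and g: "g \<in> borel_measurable S"
  shows "(\<integral>\<^sup>+x. indicator B x * g x \<partial>M) = (\<integral>\<^sup>+x. ennreal (q x) * g x \<partial>M)"
proof (rule cond_event[OF S B _ _ g])
  interpret prob_space M by (rule P)
  have idS: "id \<in> measurable M S"
  proof (rule measurableI)
    fix x assume "x \<in> space M" then show "id x \<in> space S" using S by simp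
  next
    fix A assume A: "A \<in> sets S"
    then have "A \<subseteq> space M" using S sets.sets_into_space by blast
    then have "id -` A \<inter> space M = A" by auto
    then show "id -` A \<inter> space M \<in> sets M" using A S by auto
  qed
  have qM: "q \<in> borel_measurable M" using measurable_comp[OF idS q] by (simp add: comp_def)
  show "(\<lambda>x. ennreal (q x)) \<in> borel_measurable S" using q by simp
  fix A assume A: "A \<in> sets S"
  then have AM: "A \<in> sets M" using S by auto
  have int: "integrable M (\<lambda>x. indicator A x * q x)"
  proof (rule integrable_const_bound[where B=1])
    show "AE x in M. norm (indicator A x * q x) \<le> 1"
      using qb by (intro AE_I2) (auto simp: indicator_def)
    show "(\<lambda>x. indicator A x * q x) \<in> borel_measurable M" using AM qM by simp
  qed
  have "emeasure M (B \<inter> A) = ennreal (measure M (B \<inter> A))"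
    by (simp add: emeasure_eq_measure)
  also have "\<dots> = ennreal (\<integral>x. indicator A x * q x \<partial>M)" using eq[OF A] by simp
  also have "\<dots> = (\<integral>\<^sup>+x. ennreal (indicator A x * q x) \<partial>M)"
    using int qb by (subst nn_integral_eq_integral) (auto intro!: AE_I2 simp: indicator_def)
  also have "\<dots> = (\<integral>\<^sup>+x. ennreal (q x) * indicator A x \<partial>M)"
    by (intro nn_integral_cong) (auto simp: indicator_def)
  finally show "emeasure M (B \<inter> A) = (\<integral>\<^sup>+x. ennreal (q x) * indicator A x \<partial>M)" .
qed

lemma pointwise:
  fixes f e g :: real
  assumes "f \<ge> 0" "e \<ge> 0" "0 < g" "g \<le> 1"
  shows "bern_prob g f * ((1 - g) * e) + (1 - bern_prob g f) * f \<le> g + (1 - g) * e"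
proof (cases "f \<le> g")
  case True
  then have "bern_prob g f = 0" unfolding bern_prob_def using assms
    by (auto simp: field_simps max_def)
  moreover have "0 \<le> (1 - g) * e" using assms by simp
  ultimately show ?thesis using True assms by (simp del: mult_nonneg_nonneg zero_le_mult_iff)
next
  case False
  then have p: "bern_prob g f = 1 - g / f" unfolding bern_prob_def using assms
    by (auto simp: field_simps max_def)
  have fp: "f > 0" using False assms by simp
  have "(1 - bern_prob g f) * f = g" using p fp by simp
  moreover have "bern_prob g f * ((1 - g) * e) \<le> 1 * ((1 - g) * e)"
    using p fp assms by (intro mult_right_mono) auto
  ultimately show ?thesis by simp
qed

lemma bern_prob_bounds: "0 \<le> bern_prob g f" "g \<ge> 0 \<Longrightarrow> f \<ge> 0 \<Longrightarrow> bern_prob g f \<le> 1"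
  unfolding bern_prob_def by (auto simp: max_def)


lemma bern_meas: "(\<lambda>x. bern_prob g x) \<in> borel_measurable borel"
  unfolding bern_prob_def by measurable

theorem theorem2:
  fixes M :: "'a measure" and K :: nat and \<alpha> \<gamma> :: real
    and F E :: "nat \<Rightarrow> 'a \<Rightarrow> real" and T :: "nat \<Rightarrow> 'a \<Rightarrow> bool" and N :: "nat set"
  assumes "prob_space M"
    and "K \<ge> 1"
    and "0 < \<alpha>" "\<alpha> \<le> 1" and "0 < \<gamma>" "\<gamma> \<le> 1"
    and "N \<subseteq> {..<K}"
    and "\<And>i. i < K \<Longrightarrow> F i \<in> borel_measurable M"
    and "\<And>i. i < K \<Longrightarrow> E i \<in> borel_measurable M"
    and "\<And>i \<omega>. i < K \<Longrightarrow> \<omega> \<in> space M \<Longrightarrow> F i \<omega> \<ge> 0"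
    and "\<And>i \<omega>. i < K \<Longrightarrow> \<omega> \<in> space M \<Longrightarrow> E i \<omega> \<ge> 0"
    and "\<And>i. i \<in> N \<Longrightarrow> (\<integral>\<^sup>+ \<omega>. ennreal (E i \<omega>) \<partial>M) \<le> 1"
    and "\<And>i. i < K \<Longrightarrow> T i \<in> measurable M (count_space UNIV)"
    and "\<And>i A. i < K \<Longrightarrow> A \<in> sets (FE_sigma M K F E) \<Longrightarrow>
           measure M ({\<omega> \<in> space M. T i \<omega>} \<inter> A) =
           (\<integral>\<omega>. indicator A \<omega> * bern_prob \<gamma> (F i \<omega>) \<partial>M)"
  shows "prob_space.expectation M (\<lambda>\<omega>.
           FDP N (ebh K \<alpha> (\<lambda>i. if T i \<omega> then (1 - \<gamma>) * E i \<omega> else F i \<omega>))) \<le> \<alpha>"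
proof -
  note P = assms(1) and K1 = assms(2) and a0 = assms(3) and g0 = assms(5) and g1 = assms(6)
    and NK = assms(7) and Fm = assms(8) and Em = assms(9) and Fn = assms(10) and En = assms(11)
    and Ee = assms(12) and Tm = assms(13) and Teq = assms(14)
  interpret prob_space M by (rule P)
  define S where "S = FE_sigma M K F E"
  define G where "G = ({F j -` B \<inter> space M | j B. j < K \<and> B \<in> sets borel} \<union>
      {E j -` B \<inter> space M | j B. j < K \<and> B \<in> sets borel})"
  have GM: "G \<subseteq> sets M" unfolding G_def using Fm Em by (auto intro: measurable_sets)
  then have GP: "G \<subseteq> Pow (space M)" using sets.sets_into_space by blast
  have spS: "space S = space M" unfolding S_def FE_sigma_def by (simp add: space_measure_of_conv)
  have sS: "sets S = sigma_sets (space M) G" unfolding S_def FE_sigma_def G_def[symmetric]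
    using GP by (simp add: sets_measure_of)
  have setsS: "sets S \<subseteq> sets M" unfolding sS using GM by (rule sets.sigma_sets_subset)
  have FS: "F j \<in> borel_measurable S" if "j < K" for j
  proof (rule measurableI)
    fix A :: "real set" assume "A \<in> sets borel"
    then have "F j -` A \<inter> space M \<in> G" unfolding G_def using that by blast
    then show "F j -` A \<inter> space S \<in> sets S" unfolding sS spS by auto
  qed simp
  have ES: "E j \<in> borel_measurable S" if "j < K" for j
  proof (rule measurableI)
    fix A :: "real set" assume "A \<in> sets borel"
    then have "E j -` A \<inter> space M \<in> G" unfolding G_def using that by blast
    then show "E j -` A \<inter> space S \<in> sets S" unfolding sS spS by auto
  qed simp
  define Et where "Et i \<omega> = (if T i \<omega> then (1 - \<gamma>) * E i \<omega> else F i \<omega>)" for i \<omega>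
  have Tset: "{\<omega> \<in> space M. T i \<omega>} \<in> sets M" if "i < K" for i
  proof -
    have "T i -` {True} \<inter> space M \<in> sets M" using Tm[OF that] by (rule measurable_sets) simp
    moreover have "T i -` {True} \<inter> space M = {\<omega> \<in> space M. T i \<omega>}" by auto
    ultimately show ?thesis by simp
  qed
  have Fset: "{\<omega> \<in> space M. \<not> T i \<omega>} \<in> sets M" if "i < K" for i
  proof -
    have "{\<omega> \<in> space M. \<not> T i \<omega>} = space M - {\<omega> \<in> space M. T i \<omega>}" by auto
    then show ?thesis using Tset[OF that] by auto
  qed
  have Etm: "Et i \<in> borel_measurable M" if "i < K" for i
    unfolding Et_def using Fm[OF that] Em[OF that] Tset[OF that]
    by (intro measurable_If) auto
  have Etn: "Et i \<omega> \<ge> 0" if "i < K" "\<omega> \<in> space M" for i \<omega>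
    unfolding Et_def using Fn[OF that] En[OF that] g1 by auto
  have Et1: "(\<integral>\<^sup>+\<omega>. ennreal (Et i \<omega>) \<partial>M) \<le> 1" if iN: "i \<in> N" for i
  proof -
    have iK: "i < K" using iN NK by auto
    define p where "p \<omega> = bern_prob \<gamma> (F i \<omega>)" for \<omega>
    have pS: "p \<in> borel_measurable S" unfolding p_def
      using measurable_comp[OF FS[OF iK] bern_meas] by (simp add: comp_def)
    have pM: "p \<in> borel_measurable M" unfolding p_def
      using measurable_comp[OF Fm[OF iK] bern_meas] by (simp add: comp_def)
    have pb: "0 \<le> p \<omega> \<and> p \<omega> \<le> 1" if "\<omega> \<in> space M" for \<omega>
      unfolding p_def using bern_prob_bounds[of \<gamma> "F i \<omega>"] g0 Fn[OF iK that] by auto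
    have qS: "(\<lambda>\<omega>. 1 - p \<omega>) \<in> borel_measurable S" using pS by simp
    have qb: "0 \<le> 1 - p \<omega> \<and> 1 - p \<omega> \<le> 1" if "\<omega> \<in> space M" for \<omega> using pb[OF that] by simp
    have eqT: "measure M ({\<omega> \<in> space M. T i \<omega>} \<inter> A) = (\<integral>x. indicator A x * p x \<partial>M)"
      if "A \<in> sets S" for A using Teq[OF iK] that unfolding S_def p_def by simp
    have eqF: "measure M ({\<omega> \<in> space M. \<not> T i \<omega>} \<inter> A) = (\<integral>x. indicator A x * (1 - p x) \<partial>M)"
      if A: "A \<in> sets S" for A
    proof -
      have AM: "A \<in> sets M" using A setsS by auto
      have sub: "A \<subseteq> space M" using AM sets.sets_into_space by blast
      have "{\<omega> \<in> space M. \<not> T i \<omega>} \<inter> A = A - ({\<omega> \<in> space M. T i \<omega>} \<inter> A)" using sub by auto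
      then have "measure M ({\<omega> \<in> space M. \<not> T i \<omega>} \<inter> A) = measure M A - measure M ({\<omega> \<in> space M. T i \<omega>} \<inter> A)"
        using AM Tset[OF iK] by (simp add: finite_measure_Diff)
      also have "\<dots> = (\<integral>x. indicator A x \<partial>M) - (\<integral>x. indicator A x * p x \<partial>M)"
        using eqT[OF A] AM by simp
      also have "\<dots> = (\<integral>x. indicator A x - indicator A x * p x \<partial>M)"
      proof (rule Bochner_Integration.integral_diff[symmetric])
        show "integrable M (indicator A :: 'a \<Rightarrow> real)" by (rule integrable_real_indicator[OF AM]) (simp add: top.not_eq_extremum[symmetric])
        show "integrable M (\<lambda>x. indicator A x * p x)"
        proof (rule integrable_const_bound[where B=1])
          show "AE x in M. norm (indicator A x * p x) \<le> 1"
            using pb by (intro AE_I2) (auto simp: indicator_def)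
          show "(\<lambda>x. indicator A x * p x) \<in> borel_measurable M" using AM pM by simp
        qed
      qed
      also have "\<dots> = (\<integral>x. indicator A x * (1 - p x) \<partial>M)" by (simp add: algebra_simps)
      finally show ?thesis .
    qed
    have E'S: "(\<lambda>\<omega>. ennreal ((1 - \<gamma>) * E i \<omega>)) \<in> borel_measurable S" using ES[OF iK] by simp
    have F'S: "(\<lambda>\<omega>. ennreal (F i \<omega>)) \<in> borel_measurable S" using FS[OF iK] by simp
    have E'M: "(\<lambda>\<omega>. ennreal ((1 - \<gamma>) * E i \<omega>)) \<in> borel_measurable M" using Em[OF iK] by simp
    have F'M: "(\<lambda>\<omega>. ennreal (F i \<omega>)) \<in> borel_measurable M" using Fm[OF iK] by simp
    have "(\<integral>\<^sup>+\<omega>. ennreal (Et i \<omega>) \<partial>M) =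
      (\<integral>\<^sup>+\<omega>. indicator {\<omega> \<in> space M. T i \<omega>} \<omega> * ennreal ((1 - \<gamma>) * E i \<omega>)
           + indicator {\<omega> \<in> space M. \<not> T i \<omega>} \<omega> * ennreal (F i \<omega>) \<partial>M)"
      by (intro nn_integral_cong) (auto simp: Et_def indicator_def)
    also have "\<dots> = (\<integral>\<^sup>+\<omega>. indicator {\<omega> \<in> space M. T i \<omega>} \<omega> * ennreal ((1 - \<gamma>) * E i \<omega>) \<partial>M)
        + (\<integral>\<^sup>+\<omega>. indicator {\<omega> \<in> space M. \<not> T i \<omega>} \<omega> * ennreal (F i \<omega>) \<partial>M)"
      using Tset[OF iK] Fset[OF iK] E'M F'M by (intro nn_integral_add) auto
    also have "\<dots> = (\<integral>\<^sup>+\<omega>. ennreal (p \<omega>) * ennreal ((1 - \<gamma>) * E i \<omega>) \<partial>M)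
        + (\<integral>\<^sup>+\<omega>. ennreal (1 - p \<omega>) * ennreal (F i \<omega>) \<partial>M)"
      using cond_event_real[OF P setsS spS Tset[OF iK] pS pb eqT E'S]
        cond_event_real[OF P setsS spS Fset[OF iK] qS qb eqF F'S] by simp
    also have "\<dots> = (\<integral>\<^sup>+\<omega>. ennreal (p \<omega>) * ennreal ((1 - \<gamma>) * E i \<omega>)
        + ennreal (1 - p \<omega>) * ennreal (F i \<omega>) \<partial>M)"
      using E'M F'M pM by (intro nn_integral_add[symmetric]) auto
    also have "\<dots> \<le> (\<integral>\<^sup>+\<omega>. ennreal \<gamma> + ennreal (1 - \<gamma>) * ennreal (E i \<omega>) \<partial>M)"
    proof (rule nn_integral_mono)
      fix \<omega> assume w: "\<omega> \<in> space M"
      have "ennreal (p \<omega>) * ennreal ((1 - \<gamma>) * E i \<omega>) + ennreal (1 - p \<omega>) * ennreal (F i \<omega>)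
          = ennreal (p \<omega> * ((1 - \<gamma>) * E i \<omega>) + (1 - p \<omega>) * F i \<omega>)"
        using pb[OF w] En[OF iK w] Fn[OF iK w] g1
        by (simp add: ennreal_mult)
      also have "\<dots> \<le> ennreal (\<gamma> + (1 - \<gamma>) * E i \<omega>)"
        unfolding p_def using pointwise[OF Fn[OF iK w] En[OF iK w] g0 g1] by (rule ennreal_leI)
      also have "\<dots> = ennreal \<gamma> + ennreal (1 - \<gamma>) * ennreal (E i \<omega>)"
        using g0 g1 En[OF iK w] by (simp add: ennreal_mult)
      finally show "ennreal (p \<omega>) * ennreal ((1 - \<gamma>) * E i \<omega>) + ennreal (1 - p \<omega>) * ennreal (F i \<omega>)
          \<le> ennreal \<gamma> + ennreal (1 - \<gamma>) * ennreal (E i \<omega>)" .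
    qed
    also have "\<dots> = ennreal \<gamma> + ennreal (1 - \<gamma>) * (\<integral>\<^sup>+\<omega>. ennreal (E i \<omega>) \<partial>M)"
      using Em[OF iK] by (simp add: nn_integral_add nn_integral_cmult emeasure_space_1)
    also have "\<dots> \<le> ennreal \<gamma> + ennreal (1 - \<gamma>) * 1"
      using Ee[OF iN] by (intro add_left_mono mult_left_mono) auto
    also have "\<dots> = 1" using g0 g1 by (simp del: ennreal_plus add: ennreal_plus[symmetric])
    finally show ?thesis .
  qed
  define f where "f \<omega> = FDP N (ebh K \<alpha> (\<lambda>i. Et i \<omega>))" for \<omega>
  have fb: "f \<omega> \<le> (\<Sum>i\<in>N. \<alpha> * Et i \<omega> / real K)" if "\<omega> \<in> space M" for \<omega>
    unfolding f_def using fdp_bound[OF NK a0 K1, of "\<lambda>i. Et i \<omega>"] Etn[OF _ that] by simp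
  have f0: "f \<omega> \<ge> 0" for \<omega> unfolding f_def FDP_def by simp
  have "expectation f \<le> \<alpha>"
  proof (cases "integrable M f")
    case False
    then show ?thesis using a0 by (simp add: not_integrable_integral_eq)
  next
    case True
    have "ennreal (expectation f) = (\<integral>\<^sup>+\<omega>. ennreal (f \<omega>) \<partial>M)"
      using True f0 by (subst nn_integral_eq_integral) auto
    also have "\<dots> \<le> (\<integral>\<^sup>+\<omega>. (\<Sum>i\<in>N. ennreal (\<alpha> / real K) * ennreal (Et i \<omega>)) \<partial>M)"
    proof (rule nn_integral_mono)
      fix \<omega> assume w: "\<omega> \<in> space M"
      have "ennreal (f \<omega>) \<le> ennreal (\<Sum>i\<in>N. \<alpha> * Et i \<omega> / real K)" using fb[OF w] by (rule ennreal_leI)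
      also have "\<dots> = (\<Sum>i\<in>N. ennreal (\<alpha> / real K * Et i \<omega>))"
        using NK Etn[OF _ w] a0 by (subst sum_ennreal) auto
      also have "\<dots> = (\<Sum>i\<in>N. ennreal (\<alpha> / real K) * ennreal (Et i \<omega>))"
        using NK Etn[OF _ w] a0 by (intro sum.cong refl ennreal_mult) auto
      finally show "ennreal (f \<omega>) \<le> (\<Sum>i\<in>N. ennreal (\<alpha> / real K) * ennreal (Et i \<omega>))" .
    qed
    also have "\<dots> = (\<Sum>i\<in>N. ennreal (\<alpha> / real K) * (\<integral>\<^sup>+\<omega>. ennreal (Et i \<omega>) \<partial>M))"
      using NK Etm by (subst nn_integral_sum) (auto intro!: sum.cong nn_integral_cmult)
    also have "\<dots> \<le> (\<Sum>i\<in>N. ennreal (\<alpha> / real K) * 1)"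
      using Et1 by (intro sum_mono mult_left_mono) auto
    also have "\<dots> = ennreal (\<alpha> / real K * real (card N))" using a0 by (simp add: ennreal_of_nat_eq_real_of_nat ennreal_mult[symmetric] mult.commute)
    also have "\<dots> \<le> ennreal \<alpha>"
    proof (rule ennreal_leI)
      have "card N \<le> K" using NK card_mono[OF _ NK] by simp
      then show "\<alpha> / real K * real (card N) \<le> \<alpha>" using a0 K1 by (simp add: field_simps)
    qed
    finally show ?thesis using a0 by (simp add: ennreal_le_iff)
  qed
  then show ?thesis unfolding f_def Et_def .
qed

end
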